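(* Let $S$ be an infinite commutative domain satisfying conditions (1) and (2) below, with a first-order structure expanding its ring structure. Extend the language by two unary predicate symbols $P_1,P_2$, and for $A,B\subseteq S$ let $S_{A,B}$ be the expansion in which $P_1$ is interpreted as $A$ and $P_2$ as $B$. Then there exists a first-order sentence $\Psi$ in this extended language such that: (i) if $A\subseteq B$ then $S_{A,B}\models\Psi$; (ii) if $A$ is finite and $B\subseteq S$ is arbitrary, then $S_{A,B}\models\Psi$ iff $|A|\le|B|$; (iii) if $A$ is infinite and $B$ is finite, then $S_{A,B}\not\models\Psi$. (1) For every finite $A\subseteq S$ there is $x\in S$, neither zero nor a unit, with $(x)+(a_i)=S$ for all $a_i\in A\setminus\{0\}$. (2) For every finite $A\subseteq S$ with $0\notin A$ and every $a\in S$ neither zero nor a unit, there is $g\in S$ such that each $1+a_ig$ ($a_i\in A$) is neither zero nor a unit, $(a)+(1+a_ig)=S$ for all $a_i\in A$, and $(1+a_ig)+(1+a_jg)=S$ for distinct $a_i,a_j\in A$. *)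

theory Defs
  imports Main
begin

datatype 'f trm =
    Var nat
  | Zero
  | One
  | Add "'f trm" "'f trm"
  | Mul "'f trm" "'f trm"
  | Neg "'f trm"
  | Fn 'f "'f trm list"

datatype ('f, 'r) fm =
    FFalse
  | Eq "'f trm" "'f trm"
  | Rel 'r "'f trm list"
  | P1 "'f trm"
  | P2 "'f trm"
  | Not "('f, 'r) fm"
  | And "('f, 'r) fm" "('f, 'r) fm"
  | Or "('f, 'r) fm" "('f, 'r) fm"
  | Ex nat "('f, 'r) fm"
  | All nat "('f, 'r) fm"

fun fv_trm :: "'f trm \<Rightarrow> nat set" where
  "fv_trm (Var n) = {n}"
| "fv_trm Zero = {}"
| "fv_trm One = {}"
| "fv_trm (Add s t) = fv_trm s \<union> fv_trm t"
| "fv_trm (Mul s t) = fv_trm s \<union> fv_trm t"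
| "fv_trm (Neg t) = fv_trm t"
| "fv_trm (Fn f ts) = (\<Union>t\<in>set ts. fv_trm t)"

fun fv :: "('f, 'r) fm \<Rightarrow> nat set" where
  "fv FFalse = {}"
| "fv (Eq s t) = fv_trm s \<union> fv_trm t"
| "fv (Rel r ts) = (\<Union>t\<in>set ts. fv_trm t)"
| "fv (P1 t) = fv_trm t"
| "fv (P2 t) = fv_trm t"
| "fv (Not \<phi>) = fv \<phi>"
| "fv (And \<phi> \<psi>) = fv \<phi> \<union> fv \<psi>"
| "fv (Or \<phi> \<psi>) = fv \<phi> \<union> fv \<psi>"
| "fv (Ex n \<phi>) = fv \<phi> - {n}"
| "fv (All n \<phi>) = fv \<phi> - {n}"

definition sentence :: "('f, 'r) fm \<Rightarrow> bool" where
  "sentence \<phi> \<longleftrightarrow> fv \<phi> = {}"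

fun eval_trm :: "('f \<Rightarrow> 'a list \<Rightarrow> 'a) \<Rightarrow> (nat \<Rightarrow> 'a) \<Rightarrow> 'f trm \<Rightarrow> 'a::comm_ring_1" where
  "eval_trm fI e (Var n) = e n"
| "eval_trm fI e Zero = 0"
| "eval_trm fI e One = 1"
| "eval_trm fI e (Add s t) = eval_trm fI e s + eval_trm fI e t"
| "eval_trm fI e (Mul s t) = eval_trm fI e s * eval_trm fI e t"
| "eval_trm fI e (Neg t) = - eval_trm fI e t"
| "eval_trm fI e (Fn f ts) = fI f (map (eval_trm fI e) ts)"

fun sat :: "('f \<Rightarrow> 'a list \<Rightarrow> 'a) \<Rightarrow> ('r \<Rightarrow> 'a list \<Rightarrow> bool) \<Rightarrow> 'a set \<Rightarrow> 'a set
            \<Rightarrow> (nat \<Rightarrow> 'a::comm_ring_1) \<Rightarrow> ('f, 'r) fm \<Rightarrow> bool" where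
  "sat fI rI A B e FFalse = False"
| "sat fI rI A B e (Eq s t) = (eval_trm fI e s = eval_trm fI e t)"
| "sat fI rI A B e (Rel r ts) = rI r (map (eval_trm fI e) ts)"
| "sat fI rI A B e (P1 t) = (eval_trm fI e t \<in> A)"
| "sat fI rI A B e (P2 t) = (eval_trm fI e t \<in> B)"
| "sat fI rI A B e (Not \<phi>) = (\<not> sat fI rI A B e \<phi>)"
| "sat fI rI A B e (And \<phi> \<psi>) = (sat fI rI A B e \<phi> \<and> sat fI rI A B e \<psi>)"
| "sat fI rI A B e (Or \<phi> \<psi>) = (sat fI rI A B e \<phi> \<or> sat fI rI A B e \<psi>)"
| "sat fI rI A B e (Ex n \<phi>) = (\<exists>x. sat fI rI A B (e(n := x)) \<phi>)"
| "sat fI rI A B e (All n \<phi>) = (\<forall>x. sat fI rI A B (e(n := x)) \<phi>)"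

text \<open>S_{A,B} \<Turnstile> \<phi> for a sentence (assignment irrelevant; we require all assignments).\<close>
definition models :: "('f \<Rightarrow> 'a list \<Rightarrow> 'a::comm_ring_1) \<Rightarrow> ('r \<Rightarrow> 'a list \<Rightarrow> bool) \<Rightarrow> 'a set \<Rightarrow> 'a set
            \<Rightarrow> ('f, 'r) fm \<Rightarrow> bool" where
  "models fI rI A B \<phi> \<longleftrightarrow> (\<forall>e. sat fI rI A B e \<phi>)"

text \<open>Units are the divisors of 1. (x) + (y) = S: the ideals generated by x and y sum to the whole ring.\<close>
definition comaximal :: "'a::comm_ring_1 \<Rightarrow> 'a \<Rightarrow> bool" where
  "comaximal x y \<longleftrightarrow> (\<exists>u v. u * x + v * y = 1)"

definition cond1 :: "'a::idom itself \<Rightarrow> bool" where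
  "cond1 _ \<longleftrightarrow> (\<forall>A :: 'a::idom set. finite A \<longrightarrow>
     (\<exists>x. x \<noteq> 0 \<and> \<not> x dvd 1 \<and> (\<forall>a\<in>A - {0}. comaximal x a)))"

definition cond2 :: "'a::idom itself \<Rightarrow> bool" where
  "cond2 _ \<longleftrightarrow> (\<forall>(A :: 'a::idom set) a. finite A \<longrightarrow> 0 \<notin> A \<longrightarrow> a \<noteq> 0 \<longrightarrow> \<not> a dvd 1 \<longrightarrow>
     (\<exists>g. (\<forall>ai\<in>A. 1 + ai * g \<noteq> 0 \<and> \<not> (1 + ai * g) dvd 1 \<and> comaximal a (1 + ai * g)) \<and>
          (\<forall>ai\<in>A. \<forall>aj\<in>A. ai \<noteq> aj \<longrightarrow> comaximal (1 + ai * g) (1 + aj * g))))"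

definition card_le :: "'a set \<Rightarrow> 'a set \<Rightarrow> bool" where
  "card_le A B \<longleftrightarrow> (\<exists>f. inj_on f A \<and> f ` A \<subseteq> B)"

end

theory Submission
  imports Defs
begin

definition dv :: "'f trm \<Rightarrow> 'f trm \<Rightarrow> ('f, 'r) fm" where
  "dv x y = Ex 8 (Eq y (Mul x (Var 8)))"

definition imp :: "('f, 'r) fm \<Rightarrow> ('f, 'r) fm \<Rightarrow> ('f, 'r) fm" where
  "imp p q = Or (Not p) q"

definition sb :: "nat \<Rightarrow> nat \<Rightarrow> 'f trm" where
  "sb i j = Add (Var i) (Neg (Var j))"

definition slot :: "nat \<Rightarrow> ('f, 'r) fm" where
  "slot i = And (Not (dv (Var i) One)) (dv (Var i) (Var 2))"

definition Psi :: "('f, 'r) fm" where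
  "Psi = Or (All 3 (imp (P1 (Var 3)) (P2 (Var 3))))
     (Ex 0 (Ex 1 (Ex 2 (All 3 (imp (P1 (Var 3))
        (Ex 4 (And (slot 4) (And (dv (Var 4) (sb 0 3))
          (Ex 5 (And (P2 (Var 5)) (And (dv (Var 4) (sb 1 5))
             (All 6 (All 7 (imp (And (P1 (Var 6)) (And (slot 7)
                 (And (dv (Var 7) (sb 0 6)) (dv (Var 7) (sb 1 5)))))
               (Eq (Var 6) (Var 3))))))))))))))))"

definition Char :: "'a::comm_ring_1 set \<Rightarrow> 'a set \<Rightarrow> bool" where
  "Char A B \<longleftrightarrow> A \<subseteq> B \<or> (\<exists>c d w. \<forall>a\<in>A. \<exists>q. \<not> q dvd 1 \<and> q dvd w \<and> q dvd (c - a) \<and>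
      (\<exists>b\<in>B. q dvd (d - b) \<and> (\<forall>a'\<in>A. \<forall>q'. q' dvd 1 \<or> \<not> q' dvd w \<or> \<not> q' dvd (c - a')
          \<or> \<not> q' dvd (d - b) \<or> a' = a)))"

lemma sentence_Psi: "sentence Psi"
  unfolding sentence_def Psi_def dv_def imp_def sb_def slot_def by auto

lemma models_Psi: "models fI rI A B Psi \<longleftrightarrow> Char A B"
  unfolding models_def Psi_def Char_def dv_def imp_def sb_def slot_def
  by (simp add: dvd_def subset_iff eq_commute[of 1] Ball_def Bex_def del: One_nat_def)


lemma comax_sym: "comaximal x y \<Longrightarrow> comaximal y x"
  unfolding comaximal_def by (metis add.commute)

lemma comax_mult:
  fixes x :: "'a::comm_ring_1"
  assumes "comaximal x y" "comaximal x z" shows "comaximal x (y * z)"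
proof -
  obtain u v where 1: "u * x + v * y = 1" using assms(1) unfolding comaximal_def by blast
  obtain u' v' where 2: "u' * x + v' * z = 1" using assms(2) unfolding comaximal_def by blast
  have "(u * x + v * y) * (u' * x + v' * z) = 1" using 1 2 by simp
  hence "(u * u' * x + u * v' * z + v * y * u') * x + (v * v') * (y * z) = 1"
    by (simp add: algebra_simps)
  thus ?thesis unfolding comaximal_def by blast
qed

lemma comax_one: "comaximal x (1::'a::comm_ring_1)"
  unfolding comaximal_def by (rule exI[of _ 0], rule exI[of _ 1]) simp

lemma comax_prod:
  fixes x :: "'a::comm_ring_1"
  assumes "finite S" "\<forall>i\<in>S. comaximal x (f i)" shows "comaximal x (prod f S)"
  using assms by (induction S rule: finite_induct) (auto simp: comax_one comax_mult)

lemma comax_dvd: "q dvd y \<Longrightarrow> comaximal y z \<Longrightarrow> comaximal q (z::'a::comm_ring_1)"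
  unfolding comaximal_def dvd_def by (metis mult.assoc mult.commute)

lemma comax_dvd_cancel:
  fixes q :: "'a::comm_ring_1"
  assumes "comaximal q z" "q dvd m * z" shows "q dvd m"
proof -
  obtain u v where 1: "u * q + v * z = 1" using assms(1) unfolding comaximal_def by blast
  have "m = (m * u) * q + v * (m * z)" using 1 by (metis mult.commute mult.left_commute distrib_left mult.right_neutral)
  thus ?thesis using assms(2) by (metis dvd_add dvd_mult dvd_triv_right)
qed

lemma comax_unit:
  fixes p :: "'a::comm_ring_1"
  assumes "comaximal q r" "p dvd q" "p dvd r" shows "p dvd 1"
proof -
  obtain u v where 1: "u * q + v * r = 1" using assms(1) unfolding comaximal_def by blast
  have "p dvd u * q + v * r" using assms by simp
  thus ?thesis using 1 by simp
qed

lemma comax_shift: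
  fixes q :: "'a::comm_ring_1"
  assumes "q dvd (s - t)" "comaximal q t" shows "comaximal q s"
proof -
  obtain u v where 1: "u * q + v * t = 1" using assms(2) unfolding comaximal_def by blast
  obtain k where k: "s - t = q * k" using assms(1) unfolding dvd_def by blast
  have s: "s = t + q * k" using k by (simp add: algebra_simps)
  have "(u - v * k) * q + v * s = u * q + v * t" unfolding s by (simp add: algebra_simps)
  hence "(u - v * k) * q + v * s = 1" using 1 by simp
  thus ?thesis unfolding comaximal_def by blast
qed

lemma crt:
  fixes q :: "'i \<Rightarrow> 'a::comm_ring_1"
  assumes "finite S" "\<forall>i\<in>S. \<forall>j\<in>S. i \<noteq> j \<longrightarrow> comaximal (q i) (q j)"
  shows "\<exists>c. \<forall>i\<in>S. q i dvd (c - r i)"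
  using assms
proof (induction S rule: finite_induct)
  case empty then show ?case by simp
next
  case (insert x S)
  then obtain c0 where c0: "\<forall>i\<in>S. q i dvd (c0 - r i)" by auto
  have "comaximal (q x) (prod q S)"
    using insert by (intro comax_prod) auto
  then obtain u v where uv: "u * q x + v * prod q S = 1" unfolding comaximal_def by blast
  define c where "c = c0 + (r x - c0) * v * prod q S"
  have "c - r x = (c0 - r x) * (1 - v * prod q S)" unfolding c_def by (simp add: algebra_simps)
  also have "1 - v * prod q S = u * q x" using uv by (metis add_diff_cancel_right')
  hence "(c0 - r x) * (1 - v * prod q S) = (c0 - r x) * u * q x" by simp
  finally have 1: "q x dvd (c - r x)" by simp
  have 2: "q i dvd (c - r i)" if "i \<in> S" for i
  proof -
    have "q i dvd prod q S" using that insert(1) by (simp add: dvd_prodI)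
    hence "q i dvd (r x - c0) * v * prod q S" by simp
    moreover have "c - r i = (c0 - r i) + (r x - c0) * v * prod q S" unfolding c_def by simp
    ultimately show ?thesis using c0 that by (metis dvd_add)
  qed
  show ?case using 1 2 by auto
qed

lemma slot_lemma:
  fixes q :: "'i \<Rightarrow> 'a::comm_ring_1"
  assumes "finite A" "a \<in> A" "p dvd prod q A" "p dvd y"
    "\<forall>b\<in>A - {a}. comaximal (q b) y"
  shows "p dvd q a"
proof -
  have "prod q A = q a * prod q (A - {a})" using assms(1,2) by (simp add: prod.remove)
  moreover have "comaximal y (prod q (A - {a}))"
    using assms(1,5) by (intro comax_prod) (auto intro: comax_sym)
  hence "comaximal p (prod q (A - {a}))" using assms(4) comax_dvd by blast
  ultimately show ?thesis using assms(3) comax_dvd_cancel by metis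
qed


definition Good :: "'a::comm_ring_1 set \<Rightarrow> 'a set \<Rightarrow> 'a \<Rightarrow> 'a \<Rightarrow> 'a \<Rightarrow> bool" where
  "Good A B c d w \<longleftrightarrow> (\<forall>a\<in>A. \<exists>q. \<not> q dvd 1 \<and> q dvd w \<and> q dvd (c - a) \<and>
      (\<exists>b\<in>B. q dvd (d - b) \<and> (\<forall>a'\<in>A. \<forall>q'. q' dvd 1 \<or> \<not> q' dvd w \<or> \<not> q' dvd (c - a')
          \<or> \<not> q' dvd (d - b) \<or> a' = a)))"

lemma Char_alt: "Char A B \<longleftrightarrow> A \<subseteq> B \<or> (\<exists>c d w. Good A B c d w)"
  unfolding Char_def Good_def by (rule refl)

lemma sound:
  fixes A B :: "'a::comm_ring_1 set"
  assumes "Char A B" shows "card_le A B"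
proof (cases "A \<subseteq> B")
  case True
  then show ?thesis unfolding card_le_def by (intro exI[of _ id]) auto
next
  case False
  then obtain c d w where H: "\<forall>a\<in>A. \<exists>q. \<not> q dvd 1 \<and> q dvd w \<and> q dvd (c - a) \<and>
      (\<exists>b\<in>B. q dvd (d - b) \<and> (\<forall>a'\<in>A. \<forall>q'. q' dvd 1 \<or> \<not> q' dvd w \<or> \<not> q' dvd (c - a')
          \<or> \<not> q' dvd (d - b) \<or> a' = a))"
  proof -
    have "A \<subseteq> B \<or> (\<exists>c d w. Good A B c d w)" using assms unfolding Char_alt .
    then obtain c d w where "Good A B c d w" using False by blast
    then show ?thesis unfolding Good_def by (rule that)
  qed
  define R where "R a b \<longleftrightarrow> b \<in> B \<and> (\<exists>q. \<not> q dvd 1 \<and> q dvd w \<and> q dvd (c - a) \<and> q dvd (d - b)) \<and>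
     (\<forall>a'\<in>A. \<forall>q'. q' dvd 1 \<or> \<not> q' dvd w \<or> \<not> q' dvd (c - a') \<or> \<not> q' dvd (d - b) \<or> a' = a)" for a b
  have "\<forall>a\<in>A. \<exists>b. R a b"
  proof
    fix a assume "a \<in> A"
    from bspec[OF H this] obtain q where qq: "\<not> q dvd 1 \<and> q dvd w \<and> q dvd (c - a) \<and>
      (\<exists>b\<in>B. q dvd (d - b) \<and> (\<forall>a'\<in>A. \<forall>q'. q' dvd 1 \<or> \<not> q' dvd w \<or> \<not> q' dvd (c - a') \<or> \<not> q' dvd (d - b) \<or> a' = a))" ..
    hence q: "\<not> q dvd 1" "q dvd w" "q dvd (c - a)" by blast+
    from qq have "\<exists>b\<in>B. q dvd (d - b) \<and> (\<forall>a'\<in>A. \<forall>q'. q' dvd 1 \<or> \<not> q' dvd w \<or> \<not> q' dvd (c - a') \<or> \<not> q' dvd (d - b) \<or> a' = a)" by (rule conjunct2[THEN conjunct2, THEN conjunct2])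
    then obtain b where "b \<in> B" and bb: "q dvd (d - b) \<and> (\<forall>a'\<in>A. \<forall>q'. q' dvd 1 \<or> \<not> q' dvd w \<or> \<not> q' dvd (c - a') \<or> \<not> q' dvd (d - b) \<or> a' = a)" ..
    then have "R a b" unfolding R_def using q bb by blast
    then show "\<exists>b. R a b" ..
  qed
  then obtain f where f: "\<forall>a\<in>A. R a (f a)" using bchoice by blast
  have "inj_on f A"
  proof (rule inj_onI)
    fix a a' assume a: "a \<in> A" "a' \<in> A" "f a = f a'"
    have Ra': "R a' (f a')" using f a(2) by blast
    have Ra: "R a (f a)" using f a(1) by blast
    from Ra'[unfolded R_def, THEN conjunct2, THEN conjunct1] obtain q' where
      q'c: "\<not> q' dvd 1 \<and> q' dvd w \<and> q' dvd (c - a') \<and> q' dvd (d - f a')" ..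
    hence q': "\<not> q' dvd 1" "q' dvd w" "q' dvd (c - a')" "q' dvd (d - f a')" by simp_all
    from Ra[unfolded R_def, THEN conjunct2, THEN conjunct2]
    have "\<forall>a''\<in>A. \<forall>q''. q'' dvd 1 \<or> \<not> q'' dvd w \<or> \<not> q'' dvd (c - a'') \<or> \<not> q'' dvd (d - f a) \<or> a'' = a" .
    note X = this
    have "q' dvd 1 \<or> \<not> q' dvd w \<or> \<not> q' dvd (c - a') \<or> \<not> q' dvd (d - f a) \<or> a' = a"
      by (rule spec[OF bspec[OF X a(2)]])
    moreover have "q' dvd (d - f a)" using q'(4) a(3) by (simp only:)
    ultimately show "a = a'" using q'(1,2,3) by blast
  qed
  moreover have "f ` A \<subseteq> B" using f unfolding R_def by blast
  ultimately show ?thesis unfolding card_le_def by blast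
qed

lemma complete:
  fixes A B :: "'a::idom set"
  assumes inf: "infinite (UNIV :: 'a set)" and c1: "cond1 TYPE('a)" and c2: "cond2 TYPE('a)"
    and fin: "finite A" and cl: "card_le A B"
  shows "Char A B"
proof -
  obtain f where finj: "inj_on f A" and fB: "f ` A \<subseteq> B" using cl unfolding card_le_def by blast
  define D where "D = (\<lambda>(a, a'). a - a') ` ((A \<times> A) - {p. fst p = snd p})
                    \<union> (\<lambda>(a, a'). f a - f a') ` ((A \<times> A) - {p. fst p = snd p})"
  have finD: "finite D" unfolding D_def using fin by auto
  have D1: "a - a' \<in> D" if "a \<in> A" "a' \<in> A" "a \<noteq> a'" for a a'
    unfolding D_def using that by (auto intro!: image_eqI[where x="(a, a')"])
  have D2: "f a - f a' \<in> D" if "a \<in> A" "a' \<in> A" "a \<noteq> a'" for a a'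
    unfolding D_def using that by (auto intro!: image_eqI[where x="(a, a')"])
  have D0a: "0 \<notin> (\<lambda>(a, a'). a - a') ` ((A \<times> A) - {p. fst p = snd p})" by auto
  have D0b: "0 \<notin> (\<lambda>(a, a'). f a - f a') ` ((A \<times> A) - {p. fst p = snd p})"
  proof
    assume "0 \<in> (\<lambda>(a, a'). f a - f a') ` ((A \<times> A) - {p. fst p = snd p})"
    then obtain p where p1: "p \<in> A \<times> A - {p. fst p = snd p}"
      and p2: "0 = (\<lambda>(a, a'). f a - f a') p" by (rule imageE)
    have "f (fst p) = f (snd p)" using p2 by (simp add: case_prod_beta)
    moreover have "fst p \<in> A" "snd p \<in> A" "fst p \<noteq> snd p" using p1 by auto
    ultimately have "fst p = snd p" using finj by (auto dest: inj_onD)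
    thus False using \<open>fst p \<noteq> snd p\<close> by simp
  qed
  have D0: "0 \<notin> D" unfolding D_def using D0a D0b by (simp only: Un_iff de_Morgan_disj simp_thms)
  define P where "P = prod id D"
  have P0: "P \<noteq> 0" unfolding P_def using finD D0 by (simp add: prod_zero_iff) 
  have dP: "\<delta> dvd P" if "\<delta> \<in> D" for \<delta> unfolding P_def using that finD
    by (metis dvd_prodI id_apply)
  have "infinite (UNIV - {0::'a})" using inf by simp
  then obtain E where E: "E \<subseteq> UNIV - {0::'a}" "finite E" "card E = card A"
    using infinite_arbitrarily_large by blast
  then obtain h where h: "bij_betw h A E" using finite_same_card_bij[OF fin E(2) E(3)[symmetric]] by blast
  have h0: "h i \<noteq> 0" if "i \<in> A" for i using h E(1) that by (auto simp: bij_betw_def)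
  have hinj: "inj_on h A" using h by (simp add: bij_betw_def)
  obtain x :: 'a where x: "x \<noteq> 0" "\<not> x dvd 1"
  proof -
    have "finite ({}::'a set)" by simp
    then show ?thesis using c1 that unfolding cond1_def by blast
  qed
  define AA where "AA = (\<lambda>i. P * h i) ` A"
  have "finite AA" "0 \<notin> AA" unfolding AA_def using fin P0 h0 by auto
  then obtain g where g: "\<forall>ai\<in>AA. 1 + ai * g \<noteq> 0 \<and> \<not> (1 + ai * g) dvd 1 \<and> comaximal x (1 + ai * g)"
     "\<forall>ai\<in>AA. \<forall>aj\<in>AA. ai \<noteq> aj \<longrightarrow> comaximal (1 + ai * g) (1 + aj * g)"
    using c2 x unfolding cond2_def by blast
  define qq where "qq i = 1 + P * h i * g" for i
  have qnu: "\<not> qq i dvd 1" if "i \<in> A" for i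
    using g(1) that unfolding qq_def AA_def by auto
  have qcom: "comaximal (qq i) (qq j)" if "i \<in> A" "j \<in> A" "i \<noteq> j" for i j
  proof -
    have "h i \<noteq> h j" using hinj that by (auto simp: inj_on_def)
    hence "P * h i \<noteq> P * h j" using P0 by simp
    thus ?thesis using g(2) that unfolding qq_def AA_def by auto
  qed
  have qD: "comaximal (qq i) \<delta>" if \<delta>D: "\<delta> \<in> D" for i \<delta>
  proof -
    obtain m where m: "P = \<delta> * m" using dP[OF \<delta>D] unfolding dvd_def by blast
    have "1 * qq i + (- (m * h i * g)) * \<delta> = 1" unfolding qq_def m by (simp add: algebra_simps)
    thus ?thesis unfolding comaximal_def by blast
  qed
  obtain c where c: "\<forall>i\<in>A. qq i dvd (c - i)"
    using crt[OF fin, of qq "\<lambda>i. i"] qcom by blast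
  obtain d where d: "\<forall>i\<in>A. qq i dvd (d - f i)"
    using crt[OF fin, of qq f] qcom by blast
  define w where "w = prod qq A"
  have qw: "qq i dvd w" if "i \<in> A" for i unfolding w_def using fin that by (rule dvd_prodI)
  have key: "a' = a" if "a \<in> A" "a' \<in> A" "\<not> q' dvd 1" "q' dvd w" "q' dvd (c - a')" "q' dvd (d - f a)"
    for a a' q'
  proof (rule ccontr)
    assume ne: "a' \<noteq> a"
    have "\<forall>b\<in>A - {a'}. comaximal (qq b) (c - a')"
    proof
      fix b assume b: "b \<in> A - {a'}"
      have "qq b dvd (c - a') - (b - a')" using c b by simp
      moreover have "comaximal (qq b) (b - a')" using qD D1 b that(2) by auto
      ultimately show "comaximal (qq b) (c - a')" by (rule comax_shift)
    qed
    hence 1: "q' dvd qq a'" using slot_lemma[OF fin that(2)] that(4,5) unfolding w_def by blast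
    have "\<forall>b\<in>A - {a}. comaximal (qq b) (d - f a)"
    proof
      fix b assume b: "b \<in> A - {a}"
      have "qq b dvd (d - f a) - (f b - f a)" using d b by simp
      moreover have "comaximal (qq b) (f b - f a)" using qD D2 b that(1) by auto
      ultimately show "comaximal (qq b) (d - f a)" by (rule comax_shift)
    qed
    hence 2: "q' dvd qq a" using slot_lemma[OF fin that(1)] that(4,6) unfolding w_def by blast
    have "q' dvd 1" using comax_unit[OF qcom[OF that(2,1) ne] 1 2] .
    thus False using that(3) by blast
  qed
  have "\<forall>a\<in>A. \<exists>q. \<not> q dvd 1 \<and> q dvd w \<and> q dvd (c - a) \<and>
      (\<exists>b\<in>B. q dvd (d - b) \<and> (\<forall>a'\<in>A. \<forall>q'. q' dvd 1 \<or> \<not> q' dvd w \<or> \<not> q' dvd (c - a')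
          \<or> \<not> q' dvd (d - b) \<or> a' = a))"
  proof
    fix a assume a: "a \<in> A"
    show "\<exists>q. \<not> q dvd 1 \<and> q dvd w \<and> q dvd (c - a) \<and>
      (\<exists>b\<in>B. q dvd (d - b) \<and> (\<forall>a'\<in>A. \<forall>q'. q' dvd 1 \<or> \<not> q' dvd w \<or> \<not> q' dvd (c - a')
          \<or> \<not> q' dvd (d - b) \<or> a' = a))"
    proof (intro exI[of _ "qq a"] conjI bexI[of _ "f a"] ballI allI)
      show "\<not> qq a dvd 1" using qnu a by blast
      show "qq a dvd w" using qw a by blast
      show "qq a dvd (c - a)" using c a by blast
      show "qq a dvd (d - f a)" using d a by blast
      show "f a \<in> B" using fB a by blast
    next
      fix a' q' assume "a' \<in> A"
      thus "q' dvd 1 \<or> \<not> q' dvd w \<or> \<not> q' dvd (c - a') \<or> \<not> q' dvd (d - f a) \<or> a' = a"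
        using key[OF a, of a' q'] by blast
    qed
  qed
  thus ?thesis unfolding Char_def by blast
qed

theorem lemma2p6:
  fixes fI :: "'f \<Rightarrow> 'a list \<Rightarrow> 'a::idom"
    and rI :: "'r \<Rightarrow> 'a list \<Rightarrow> bool"
  assumes "infinite (UNIV :: 'a set)"
    and "cond1 TYPE('a)"
    and "cond2 TYPE('a)"
  shows "\<exists>\<Psi> :: ('f, 'r) fm. sentence \<Psi> \<and>
     (\<forall>A B. A \<subseteq> B \<longrightarrow> models fI rI A B \<Psi>) \<and>
     (\<forall>A B. finite A \<longrightarrow> (models fI rI A B \<Psi> \<longleftrightarrow> card_le A B)) \<and>
     (\<forall>A B. infinite A \<longrightarrow> finite B \<longrightarrow> \<not> models fI rI A B \<Psi>)"
proof -
  have snd: "models fI rI A B (Psi :: ('f, 'r) fm) \<Longrightarrow> card_le A B" for A B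
    using sound models_Psi by metis
  show ?thesis
  proof (intro exI[of _ "Psi :: ('f, 'r) fm"] conjI allI impI)
    show "sentence (Psi :: ('f, 'r) fm)" by (rule sentence_Psi)
  next
    fix A B :: "'a set" assume "A \<subseteq> B"
    thus "models fI rI A B (Psi :: ('f, 'r) fm)" unfolding models_Psi Char_def by blast
  next
    fix A B :: "'a set" assume "finite A"
    thus "models fI rI A B (Psi :: ('f, 'r) fm) \<longleftrightarrow> card_le A B"
      using snd complete[OF assms] models_Psi by metis
  next
    fix A B :: "'a set" assume A: "infinite A" and B: "finite B"
    show "\<not> models fI rI A B (Psi :: ('f, 'r) fm)"
    proof
      assume "models fI rI A B (Psi :: ('f, 'r) fm)"
      then obtain f where "inj_on f A" "f ` A \<subseteq> B" using snd unfolding card_le_def by blast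
      thus False using A B by (metis finite_imageD finite_subset)
    qed
  qed
qed

end
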